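(* Let $\mu\in(0,1)$ and let $\beta:[0,\infty)\to(0,\infty)$ be positive, bounded, non-increasing with $\lim_{a\to\infty}a\beta(a)=\mu$, and suppose $\beta(a)=\frac{\mu}{1+a}+g(a)$ where $g\in L^1(0,\infty)$ and there exist $K_0,\alpha>0$ with $\int_a^\infty|g(s)|ds\le K_0(1+a)^{-\alpha}$ for all $a\ge0$. Let $B(a)=\int_0^a\beta$, $W(\tau,b)=C(\tau)e^{-B(e^{\tau}b)}(1-b)^{\mu-1}$ on $[0,1)$ with $C(\tau)>0$ such that $\int_0^1W(\tau,b)db=1$, and $W_\infty(b)=\frac{b^{-\mu}(1-b)^{\mu-1}}{\int_0^1b'^{-\mu}(1-b')^{\mu-1}db'}$. Then for all $\tau\ge0$, $$\|W(\tau,\cdot)-W_\infty\|_{L^1(0,1)}\le2\int_\tau^\infty\int_0^1\left|e^{\tau'}b\beta(e^{\tau'}b)-\mu\right|W(\tau',b)\,db\,d\tau'.$$ *)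

theory Defs
  imports "HOL-Analysis.Analysis"
begin

definition Bfun :: "(real \<Rightarrow> real) \<Rightarrow> real \<Rightarrow> real" where
  "Bfun \<beta> a = integral {0..a} \<beta>"

definition Wfun :: "real \<Rightarrow> (real \<Rightarrow> real) \<Rightarrow> (real \<Rightarrow> real) \<Rightarrow> real \<Rightarrow> real \<Rightarrow> real" where
  "Wfun \<mu> \<beta> C \<tau> b = C \<tau> * exp (- Bfun \<beta> (exp \<tau> * b)) * (1 - b) powr (\<mu> - 1)"

definition Winf :: "real \<Rightarrow> real \<Rightarrow> real" where
  "Winf \<mu> b = b powr (-\<mu>) * (1 - b) powr (\<mu> - 1) /
     integral {0..1} (\<lambda>b'. b' powr (-\<mu>) * (1 - b') powr (\<mu> - 1))"

end

theory Submission
  imports Defs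
begin


lemma countable_negligible: "countable (A::real set) \<Longrightarrow> negligible A"
  by (simp add: negligible_iff_null_sets null_sets_completionI countable_imp_null_set_lborel)

lemma dct01:
  fixes f :: "nat \<Rightarrow> real \<Rightarrow> real" and F h :: "real \<Rightarrow> real"
  assumes fi: "\<And>n. f n integrable_on {0..1}" and hi: "h integrable_on {0..1}"
    and le: "\<And>n x. x \<in> {0..1} \<Longrightarrow> \<bar>f n x\<bar> \<le> h x"
    and E: "countable E" and conv: "\<And>x. x \<in> {0<..<1} - E \<Longrightarrow> (\<lambda>n. f n x) \<longlonglongrightarrow> F x"
  shows "(\<lambda>n. integral {0..1} (f n)) \<longlonglongrightarrow> integral {0..1} F" "F integrable_on {0..1}"
proof -
  define S where "S = {0<..<(1::real)} - E"
  have N: "negligible ({0,1} \<union> E)" using E by (intro countable_negligible) auto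
  have sub: "{0..1} - S \<subseteq> {0,1} \<union> E" "S - {0..1} = {}" by (auto simp: S_def)
  have negs: "negligible {x \<in> {0..1} - S. p x \<noteq> 0}" "negligible {x \<in> S - {0..1}. p x \<noteq> 0}"
    for p :: "real \<Rightarrow> real"
  proof -
    show "negligible {x \<in> {0..1} - S. p x \<noteq> 0}"
      by (rule negligible_subset[OF N]) (use sub in blast)
    show "negligible {x \<in> S - {0..1}. p x \<noteq> 0}"
      by (rule negligible_subset[OF N]) (use sub in blast)
  qed
  have fiS: "f n integrable_on S" for n by (rule integrable_spike_set[OF fi negs])
  have hiS: "h integrable_on S" by (rule integrable_spike_set[OF hi negs])
  have dc: "F integrable_on S" "(\<lambda>n. integral S (f n)) \<longlonglongrightarrow> integral S F"
    using dominated_convergence[where f=f and S=S and h=h and g=F] fiS hiS le conv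
    by (auto simp: S_def)
  have eq: "integral {0..1} p = integral S p" for p :: "real \<Rightarrow> real"
    by (rule integral_spike_set[OF negs])
  show "(\<lambda>n. integral {0..1} (f n)) \<longlonglongrightarrow> integral {0..1} F" using dc(2) by (simp add: eq)
  have negs': "negligible {x \<in> S - {0..1}. p x \<noteq> 0}" "negligible {x \<in> {0..1} - S. p x \<noteq> 0}"
    for p :: "real \<Rightarrow> real" using negs by auto
  show "F integrable_on {0..1}" by (rule integrable_spike_set[OF dc(1) negs'])
qed

lemma mono_countable_deriv:
  fixes g :: "real \<Rightarrow> real"
  assumes ab: "a \<le> b" and cont: "continuous_on {a..b} g" and S: "countable S"
    and der: "\<And>x. x \<in> {a<..<b} - S \<Longrightarrow> \<exists>D\<ge>0. (g has_real_derivative D) (at x)"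
  shows "g a \<le> g b"
proof (rule ccontr)
  assume "\<not> g a \<le> g b"
  hence gab: "g b < g a" by simp
  with ab have ab': "a < b" by (cases "a = b") auto
  define \<epsilon> where "\<epsilon> = (g a - g b) / (2 * (b - a))"
  have epos: "\<epsilon> > 0" using gab ab' by (simp add: \<epsilon>_def)
  define h where "h x = g x + \<epsilon> * (x - a)" for x
  have "\<epsilon> * (b - a) = (g a - g b)/2" using ab' by (simp add: \<epsilon>_def field_simps)
  hence hab: "h b < h a" using gab by (simp add: h_def)
  have hcont: "continuous_on {a..b} h" unfolding h_def by (intro continuous_intros cont)
  have hder: "\<exists>D>0. (h has_real_derivative D) (at x)" if xS: "x \<in> {a<..<b} - S" for x
  proof -
    obtain D where "D \<ge> 0" "(g has_real_derivative D) (at x)" using der[OF xS] by blast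
    hence "(h has_real_derivative D + \<epsilon>) (at x)" unfolding h_def
      by (auto intro!: derivative_eq_intros)
    thus ?thesis using \<open>D \<ge> 0\<close> epos by (intro exI[of _ "D + \<epsilon>"]) auto
  qed
  have "uncountable ({h b<..<h a} - h ` S)"
    using uncountable_open_interval[of "h b" "h a"] hab countable_image[OF S, of h]
    by (metis countable_Un_iff Diff_Un Un_Diff_cancel2 sup.commute uncountable_infinite) 
  then obtain y where y: "y \<in> {h b<..<h a}" "y \<notin> h ` S"
    by (metis Diff_iff countable_empty ex_in_conv)
  define T where "T = {a..b} \<inter> h -` {y..}"
  have "closed T" unfolding T_def by (intro continuous_closed_preimage hcont) auto
  moreover have "bounded T" by (rule bounded_subset[of "{a..b}"]) (auto simp: T_def)
  ultimately have "compact T" by (simp add: compact_eq_bounded_closed)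
  moreover have "a \<in> T" using y ab by (auto simp: T_def)
  ultimately obtain x0 where x0: "x0 \<in> T" "\<And>t. t \<in> T \<Longrightarrow> t \<le> x0"
    using compact_attains_sup[of T] by blast
  have x0ab: "a \<le> x0" "x0 \<le> b" "y \<le> h x0" using x0(1) by (auto simp: T_def)
  have "x0 \<noteq> b" using x0ab y by auto
  hence x0b: "x0 < b" using x0ab by simp
  have hx0: "h x0 = y"
  proof (rule ccontr)
    assume "h x0 \<noteq> y"
    hence "h b \<le> y" "y \<le> h x0" using x0ab y by auto
    then obtain x1 where "x0 \<le> x1" "x1 \<le> b" "h x1 = y"
      using IVT2'[of h b y x0] x0b continuous_on_subset[OF hcont, of "{x0..b}"] x0ab by auto
    hence "x1 \<in> T" using x0ab by (auto simp: T_def)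
    hence "x1 \<le> x0" by (rule x0(2))
    with \<open>x0 \<le> x1\<close> \<open>h x1 = y\<close> \<open>h x0 \<noteq> y\<close> show False by auto
  qed
  have "x0 \<noteq> a" using hx0 y by auto
  moreover have "x0 \<notin> S" using hx0 y by auto
  ultimately have "x0 \<in> {a<..<b} - S" using x0ab x0b by auto
  then obtain D where "D > 0" "(h has_real_derivative D) (at x0)" using hder by blast
  then obtain d where d: "d > 0" "\<And>e. e > 0 \<Longrightarrow> e < d \<Longrightarrow> h x0 < h (x0 + e)"
    using DERIV_pos_inc_right by blast
  define e where "e = min d (b - x0) / 2"
  have e1: "min d (b - x0) > 0" "min d (b - x0) \<le> d" "min d (b - x0) \<le> b - x0" using d x0b by auto
  have e2: "2 * e = min d (b - x0)" by (simp add: e_def)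
  have e: "e > 0" "e < d" "x0 + e \<le> b" using e1 e2 by linarith+
  have "h x0 < h (x0 + e)" using d e by auto
  hence "x0 + e \<in> T" using hx0 e x0ab by (auto simp: T_def)
  hence "x0 + e \<le> x0" by (rule x0(2))
  with e show False by simp
qed
lemma ftc_countable_abs:
  fixes f f' \<phi> :: "real \<Rightarrow> real"
  assumes ab: "a \<le> b" and fc: "continuous_on {a..b} f" and S: "countable S"
    and \<phi>i: "\<phi> integrable_on {a..b}"
    and der: "\<And>x. x \<in> {a<..<b} - S \<Longrightarrow>
        (f has_real_derivative f' x) (at x) \<and> \<bar>f' x\<bar> \<le> \<phi> x \<and> isCont \<phi> x"
  shows "\<bar>f b - f a\<bar> \<le> integral {a..b} \<phi>"
proof -
  define \<Phi> where "\<Phi> x = integral {a..x} \<phi>" for x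
  have \<Phi>c: "continuous_on {a..b} \<Phi>" unfolding \<Phi>_def by (rule indefinite_integral_continuous_1[OF \<phi>i])
  have \<Phi>d: "(\<Phi> has_real_derivative \<phi> x) (at x)" if x: "x \<in> {a<..<b} - S" for x
  proof -
    have "((\<lambda>u. integral {a..u} \<phi>) has_vector_derivative \<phi> x) (at x within {a..b} - {})"
    proof (intro integral_has_vector_derivative_continuous_at[OF \<phi>i])
      show "x \<in> {a..b} - {}" using x by auto
      show "continuous (at x within {a..b} - {}) \<phi>" using der[OF x] continuous_at_imp_continuous_within by blast
    qed auto
    moreover have "x \<in> interior ({a..b} - {})" using x by (simp add: interior_atLeastAtMost_real)
    ultimately show ?thesis
      unfolding \<Phi>_def has_real_derivative_iff_has_vector_derivative by (metis at_within_interior)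
  qed
  have 1: "(\<Phi> a - f a) \<le> (\<Phi> b - f b)"
  proof (rule mono_countable_deriv[OF ab _ S])
    show "continuous_on {a..b} (\<lambda>x. \<Phi> x - f x)" by (intro continuous_intros \<Phi>c fc)
    fix x assume x: "x \<in> {a<..<b} - S"
    have "((\<lambda>x. \<Phi> x - f x) has_real_derivative \<phi> x - f' x) (at x)"
      using DERIV_diff[OF \<Phi>d[OF x] conjunct1[OF der[OF x]]] .
    moreover have "\<phi> x - f' x \<ge> 0" using der[OF x] by auto
    ultimately show "\<exists>D\<ge>0. ((\<lambda>x. \<Phi> x - f x) has_real_derivative D) (at x)" by blast
  qed
  have 2: "(\<Phi> a + f a) \<le> (\<Phi> b + f b)"
  proof (rule mono_countable_deriv[OF ab _ S])
    show "continuous_on {a..b} (\<lambda>x. \<Phi> x + f x)" by (intro continuous_intros \<Phi>c fc)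
    fix x assume x: "x \<in> {a<..<b} - S"
    have "((\<lambda>x. \<Phi> x + f x) has_real_derivative \<phi> x + f' x) (at x)"
      using DERIV_add[OF \<Phi>d[OF x] conjunct1[OF der[OF x]]] .
    moreover have "\<phi> x + f' x \<ge> 0" using der[OF x] by auto
    ultimately show "\<exists>D\<ge>0. ((\<lambda>x. \<Phi> x + f x) has_real_derivative D) (at x)" by blast
  qed
  have "\<Phi> a = 0" by (simp add: \<Phi>_def)
  with 1 2 have "\<bar>f b - f a\<bar> \<le> \<Phi> b" by linarith
  thus ?thesis by (simp add: \<Phi>_def)
qed

lemma borel_lebesgue_on: "f \<in> borel_measurable borel \<Longrightarrow> f \<in> borel_measurable (lebesgue_on S)"
  using measurable_comp[OF id_borel_measurable_lebesgue_on[of S], of f borel] by simp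

locale L =
  fixes \<mu> :: real and \<beta> g :: "real \<Rightarrow> real"
  assumes mu: "0 < \<mu>" "\<mu> < 1"
    and beta_pos: "\<forall>a\<ge>0. \<beta> a > 0"
    and beta_mono: "\<forall>a b. 0 \<le> a \<longrightarrow> a \<le> b \<longrightarrow> \<beta> b \<le> \<beta> a"
    and beta_g: "\<forall>a\<ge>0. \<beta> a = \<mu> / (1 + a) + g a"
    and g_L1: "g absolutely_integrable_on {0..}"

context L
begin

lemma beta_le: "0 \<le> x \<Longrightarrow> \<beta> x \<le> \<beta> 0" using beta_mono by auto
lemma beta_gt: "0 \<le> x \<Longrightarrow> \<beta> x > 0" using beta_pos by auto

lemma g_int: "g integrable_on {0..x}"
  by (rule set_lebesgue_integral_eq_integral(1)[OF absolutely_integrable_on_subinterval[OF g_L1]]) auto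

lemma beta_int: "\<beta> integrable_on {0..x}"
proof -
  have "(\<lambda>a. \<mu> / (1 + a) + g a) integrable_on {0..x}"
    by (intro integrable_add g_int integrable_continuous_interval continuous_intros) auto
  thus ?thesis by (rule integrable_eq) (use beta_g in auto)
qed

lemma beta_int': "0 \<le> x \<Longrightarrow> \<beta> integrable_on {x..y}"
  by (rule integrable_on_subinterval[OF beta_int[of "max x y"]]) auto

lemma B_split: "0 \<le> x \<Longrightarrow> x \<le> y \<Longrightarrow> Bfun \<beta> y = Bfun \<beta> x + integral {x..y} \<beta>"
  unfolding Bfun_def by (metis Henstock_Kurzweil_Integration.integral_combine beta_int)

lemma B_diff_bounds: assumes "0 \<le> x" "x \<le> y"
  shows "0 \<le> Bfun \<beta> y - Bfun \<beta> x" "Bfun \<beta> y - Bfun \<beta> x \<le> \<beta> 0 * (y - x)"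
proof -
  have i: "\<beta> integrable_on {x..y}" using beta_int' assms by auto
  have "integral {x..y} \<beta> \<ge> 0" using assms beta_gt[THEN less_imp_le] by (intro integral_nonneg i) auto
  thus "0 \<le> Bfun \<beta> y - Bfun \<beta> x" using B_split[OF assms] by simp
  have "integral {x..y} \<beta> \<le> integral {x..y} (\<lambda>_. \<beta> 0)"
    using assms beta_le by (intro integral_le i) auto
  thus "Bfun \<beta> y - Bfun \<beta> x \<le> \<beta> 0 * (y - x)" using B_split[OF assms] assms by (simp add: mult.commute)
qed

lemma B_nonneg: "0 \<le> x \<Longrightarrow> 0 \<le> Bfun \<beta> x"
  using B_diff_bounds(1)[of 0 x] by (simp add: Bfun_def)

lemma B_lip: "0 \<le> x \<Longrightarrow> 0 \<le> y \<Longrightarrow> \<bar>Bfun \<beta> y - Bfun \<beta> x\<bar> \<le> \<beta> 0 * \<bar>y - x\<bar>"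
  using B_diff_bounds[of x y] B_diff_bounds[of y x] by (cases "x \<le> y") auto

lemma B_mono: "x \<le> y \<Longrightarrow> Bfun \<beta> x \<le> Bfun \<beta> y"
proof (cases "x < 0")
  case True
  hence "Bfun \<beta> x = 0" by (simp add: Bfun_def)
  moreover have "0 \<le> Bfun \<beta> y" using B_nonneg[of y] by (cases "y < 0") (auto simp: Bfun_def)
  ultimately show ?thesis by simp
next
  case False
  assume "x \<le> y" thus ?thesis using B_diff_bounds(1)[of x y] False by simp
qed

lemma B_meas[measurable]: "Bfun \<beta> \<in> borel_measurable borel"
  by (rule borel_measurable_mono) (auto simp: mono_def B_mono)

lemma B_cont: "continuous_on {0..} (Bfun \<beta>)"
  unfolding continuous_on_iff
proof (intro ballI allI impI)
  fix x e :: real assume x: "x \<in> {0..}" and e: "e > 0"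
  show "\<exists>d>0. \<forall>x'\<in>{0..}. dist x' x < d \<longrightarrow> dist (Bfun \<beta> x') (Bfun \<beta> x) < e"
  proof (intro exI[of _ "e / (\<beta> 0 + 1)"] conjI ballI impI)
    show "e / (\<beta> 0 + 1) > 0" using e beta_gt[of 0] by auto
    fix x' assume x': "x' \<in> {0..}" "dist x' x < e / (\<beta> 0 + 1)"
    have "dist (Bfun \<beta> x') (Bfun \<beta> x) \<le> \<beta> 0 * \<bar>x' - x\<bar>"
      using B_lip[of x x'] x x' by (simp add: dist_real_def)
    also have "\<dots> \<le> (\<beta> 0 + 1) * \<bar>x' - x\<bar>" by (simp add: mult_right_mono)
    also have "\<dots> < e" using x' beta_gt[of 0] by (simp add: dist_real_def field_simps)
    finally show "dist (Bfun \<beta> x') (Bfun \<beta> x) < e" .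
  qed
qed

lemma B_deriv:
  assumes x: "x > 0" and c: "isCont \<beta> x"
  shows "(Bfun \<beta> has_real_derivative \<beta> x) (at x)"
proof -
  have "((\<lambda>u. integral {0..u} \<beta>) has_vector_derivative \<beta> x) (at x within {0..x+1} - {})"
    by (intro integral_has_vector_derivative_continuous_at beta_int)
       (use x c continuous_at_imp_continuous_within in auto)
  moreover have "x \<in> interior ({0..x+1} - {})" using x by (simp add: interior_atLeastAtMost_real)
  ultimately show ?thesis
    unfolding Bfun_def has_real_derivative_iff_has_vector_derivative by (metis at_within_interior)
qed

end

lemma exp_lip: "\<bar>exp s - exp t\<bar> \<le> exp (max s t) * \<bar>s - t\<bar>" for s t :: real
proof -
  have key: "exp y - exp x \<le> exp y * (y - x)" if "x \<le> y" for x y :: real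
  proof -
    have h: "1 + (x - y) \<le> exp (x - y)" by (rule exp_ge_add_one_self)
    have h': "1 - (y - x) \<le> exp (x - y)" using h by linarith
    have "exp y * (1 - (y - x)) \<le> exp y * exp (x - y)" using h' by (intro mult_left_mono) auto
    also have "\<dots> = exp x" by (simp add: exp_add[symmetric])
    finally show ?thesis by (simp add: algebra_simps)
  qed
  show ?thesis
  proof (cases "s \<le> t")
    case True thus ?thesis using key[OF True] by (simp add: max_def abs_if)
  next
    case False thus ?thesis using key[of t s] by (simp add: max_def abs_if)
  qed
qed

lemma expneg_lip: "0 \<le> x \<Longrightarrow> 0 \<le> y \<Longrightarrow> \<bar>exp (-x) - exp (-y)\<bar> \<le> \<bar>x - y\<bar>" for x y :: real
proof -
  have key: "exp (-x) - exp (-y) \<le> y - x" if "0 \<le> x" "x \<le> y" for x y :: real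
  proof -
    have h: "1 + (x - y) \<le> exp (x - y)" by (rule exp_ge_add_one_self)
    have h': "1 - (y - x) \<le> exp (x - y)" using h by linarith
    have "exp (-x) * (1 - (y - x)) \<le> exp (-x) * exp (x - y)" using h' by (intro mult_left_mono) auto
    also have "\<dots> = exp (-y)" by (simp add: exp_add[symmetric])
    finally have "exp (-x) - exp (-y) \<le> exp (-x) * (y - x)" by (simp add: algebra_simps)
    also have "\<dots> \<le> 1 * (y - x)" using that by (intro mult_right_mono) auto
    finally show ?thesis by simp
  qed
  assume "0 \<le> x" "0 \<le> y"
  thus ?thesis
  proof (cases "x \<le> y")
    case True
    have "exp (-y) \<le> exp (-x)" using True by simp
    thus ?thesis using key[OF \<open>0 \<le> x\<close> True] True by simp
  next
    case False
    have "exp (-x) \<le> exp (-y)" using False by simp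
    thus ?thesis using key[of y x] False \<open>0 \<le> y\<close> by simp
  qed
qed

context L begin

definition "wt b = (1 - b) powr (\<mu> - 1)"
definition "u t b = exp (- Bfun \<beta> (exp t * b)) * wt b"
definition "U t = integral {0..1} (u t)"
definition "\<beta>p x = \<beta> (max 0 x)"
definition "k t b = exp t * b * \<beta>p (exp t * b)"
definition "M t = integral {0..1} (\<lambda>b. k t b * u t b)"
definition "Dset = {x\<in>{0<..}. \<not> isCont \<beta> x}"

lemma k_eq: "0 \<le> b \<Longrightarrow> k t b = exp t * b * \<beta> (exp t * b)" by (simp add: k_def \<beta>p_def)

lemma wt_nonneg: "0 \<le> wt b" by (simp add: wt_def)
lemma wt_meas[measurable]: "wt \<in> borel_measurable borel" unfolding wt_def by measurable

lemma wt_int: "wt integrable_on {0..1}"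
proof -
  have i: "(\<lambda>t. t powr (1 - 1) * (1 - t) powr (\<mu> - 1)) integrable_on {0..1}"
    using has_integral_Beta_real[of 1 \<mu>] mu by (auto intro: has_integral_integrable)
  show ?thesis
    by (rule integrable_spike_finite[where S="{0}", OF _ _ i]) (auto simp: wt_def)
qed

lemma u_meas[measurable]: "u t \<in> borel_measurable borel" unfolding u_def by measurable

lemma u_bounds: "b \<in> {0..1} \<Longrightarrow> 0 \<le> u t b \<and> u t b \<le> wt b"
  using B_nonneg[of "exp t * b"] wt_nonneg[of b] by (auto simp: u_def intro!: mult_left_le_one_le)

lemma int01: "f \<in> borel_measurable borel \<Longrightarrow> (\<And>b. b \<in> {0..1} \<Longrightarrow> \<bar>f b\<bar> \<le> c * wt b)
   \<Longrightarrow> f integrable_on {0..1}"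
  by (rule measurable_bounded_by_integrable_imp_integrable[of f _ "\<lambda>b. c * wt b"])
     (auto intro: borel_lebesgue_on integrable_on_cmult_left[OF wt_int, simplified])

lemma u_int: "u t integrable_on {0..1}"
  by (rule int01[where c=1]) (use u_bounds in auto)

lemma Dset_countable: "countable Dset"
proof -
  have "mono_on {0<..} (\<lambda>x. - \<beta> x)" using beta_mono by (auto simp: mono_on_def)
  hence "countable {a\<in>{0<..}. \<not> isCont (\<lambda>x. - \<beta> x) a}"
    by (intro mono_on_ctble_discont_open) auto
  moreover have "isCont \<beta> a" if "isCont (\<lambda>x. - \<beta> x) a" for a
    using isCont_minus[OF that] by simp
  ultimately show ?thesis unfolding Dset_def
    by (metis (mono_tags, lifting) countable_subset mem_Collect_eq subsetI)
qed

lemma u_deriv: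
  assumes b: "b \<in> {0<..<1}" and nd: "exp t * b \<notin> Dset"
  shows "((\<lambda>s. u s b) has_real_derivative -(k t b * u t b)) (at t)"
proof -
  have xpos: "exp t * b > 0" using b by auto
  hence c: "isCont \<beta> (exp t * b)" using nd by (auto simp: Dset_def)
  have d1: "((\<lambda>s. exp s * b) has_real_derivative exp t * b) (at t)"
    by (auto intro!: derivative_eq_intros)
  have d2: "((\<lambda>s. Bfun \<beta> (exp s * b)) has_real_derivative \<beta> (exp t * b) * (exp t * b)) (at t)"
    by (rule DERIV_chain2[OF B_deriv[OF xpos c] d1])
  have "((\<lambda>s. exp (- Bfun \<beta> (exp s * b)) * wt b) has_real_derivative
      exp (- Bfun \<beta> (exp t * b)) * (- (\<beta> (exp t * b) * (exp t * b))) * wt b) (at t)"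
    by (rule DERIV_cmult_right[OF DERIV_chain2[OF DERIV_exp DERIV_minus[OF d2]]])
  moreover have "k t b = exp t * b * \<beta> (exp t * b)" using b by (intro k_eq) auto
  ultimately show ?thesis unfolding u_def by (simp add: algebra_simps)
qed

lemma betap_meas[measurable]: "\<beta>p \<in> borel_measurable borel"
proof -
  have "mono (\<lambda>x. - \<beta>p x)" unfolding mono_def \<beta>p_def using beta_mono by auto
  hence "(\<lambda>x. - (- \<beta>p x)) \<in> borel_measurable borel" by (intro borel_measurable_uminus borel_measurable_mono)
  thus ?thesis by simp
qed

lemma betap_eq: "0 \<le> x \<Longrightarrow> \<beta>p x = \<beta> x" by (simp add: \<beta>p_def)

lemma betap_cont: "0 < x \<Longrightarrow> isCont \<beta> x \<Longrightarrow> isCont \<beta>p x"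
  unfolding \<beta>p_def by (rule isCont_o2[where f="max 0"]) (auto intro: continuous_intros simp: max_def)

lemma k_meas[measurable]: "k t \<in> borel_measurable borel" unfolding k_def by measurable

lemma k_bounds: "b \<in> {0..1} \<Longrightarrow> 0 \<le> k t b \<and> k t b \<le> exp t * \<beta> 0"
proof -
  assume b: "b \<in> {0..1}"
  have x: "0 \<le> exp t * b" using b by auto
  have "k t b = exp t * b * \<beta> (exp t * b)" using x by (simp add: k_def betap_eq)
  moreover have "0 < \<beta> (exp t * b)" "\<beta> (exp t * b) \<le> \<beta> 0" using beta_gt[OF x] beta_le[OF x] by auto
  moreover have "b * \<beta> (exp t * b) \<le> 1 * \<beta> 0"
    using b beta_gt[OF x] beta_le[OF x] by (intro mult_mono) auto
  ultimately show ?thesis using x b by (auto simp: mult.assoc)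
qed


lemma ku_int: "(\<lambda>b. k t b * u t b) integrable_on {0..1}"
proof (rule int01[where c="exp t * \<beta> 0"])
  fix b :: real assume b: "b \<in> {0..1}"
  show "\<bar>k t b * u t b\<bar> \<le> exp t * \<beta> 0 * wt b"
    using k_bounds[OF b] u_bounds[OF b] beta_gt[of 0] by (auto simp: abs_mult intro!: mult_mono)
qed measurable

lemma u_lip: assumes b: "b \<in> {0..1}"
  shows "\<bar>u s b - u t b\<bar> \<le> \<beta> 0 * exp (max s t) * \<bar>s - t\<bar> * wt b"
proof -
  have "\<bar>u s b - u t b\<bar> = \<bar>exp (- Bfun \<beta> (exp s * b)) - exp (- Bfun \<beta> (exp t * b))\<bar> * wt b"
    by (simp add: u_def wt_nonneg left_diff_distrib[symmetric] abs_mult)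
  also have "\<dots> \<le> \<bar>Bfun \<beta> (exp s * b) - Bfun \<beta> (exp t * b)\<bar> * wt b"
    using b by (intro mult_right_mono expneg_lip B_nonneg wt_nonneg) auto
  also have "\<dots> \<le> (\<beta> 0 * \<bar>exp s * b - exp t * b\<bar>) * wt b"
    using b by (intro mult_right_mono B_lip wt_nonneg) auto
  also have "\<bar>exp s * b - exp t * b\<bar> \<le> \<bar>exp s - exp t\<bar>"
    using b by (auto simp: left_diff_distrib[symmetric] abs_mult intro: mult_left_le)
  also have "\<bar>exp s - exp t\<bar> \<le> exp (max s t) * \<bar>s - t\<bar>" by (rule exp_lip)
  finally show ?thesis using beta_gt[of 0] wt_nonneg[of b]
    by (auto simp: mult_ac intro: mult_right_mono mult_left_mono)
qed

lemma E_countable: "countable ((\<lambda>x. x / exp t) ` Dset)"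
  using Dset_countable by auto

lemma notin_E: "b \<notin> (\<lambda>x. x / exp t) ` Dset \<Longrightarrow> exp t * b \<notin> Dset"
  by (metis image_eqI nonzero_mult_div_cancel_left exp_not_eq_zero)

lemma bounded_seq:
  fixes X :: "nat \<Rightarrow> real"
  assumes "X \<longlonglongrightarrow> t"
  obtains R where "\<And>i. \<bar>X i\<bar> \<le> R" "\<bar>t\<bar> \<le> R"
proof -
  obtain K where K: "\<forall>n. norm (X n) \<le> K" using convergent_imp_Bseq[OF convergentI[OF assms]] BseqE by blast
  show ?thesis
  proof (rule that)
    show "\<bar>X i\<bar> \<le> max K \<bar>t\<bar>" for i using K[rule_format, of i] by auto
  qed auto
qed

lemma U_deriv: "(U has_real_derivative - M t) (at t)"
proof -
  define E where "E = (\<lambda>x. x / exp t) ` Dset"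
  have E: "countable E" unfolding E_def by (rule E_countable)
  have conv_pt: "((\<lambda>s. (u s b - u t b) / (s - t)) \<longlongrightarrow> -(k t b * u t b)) (at t)"
    if b: "b \<in> {0<..<1} - E" for b
    using u_deriv[of b t] b notin_E[of b t] unfolding E_def has_field_derivative_iff by auto
  show ?thesis unfolding has_field_derivative_iff
  proof (subst tendsto_at_iff_sequentially, intro allI impI)
    fix X :: "nat \<Rightarrow> real" assume X: "\<forall>i. X i \<in> UNIV - {t}" "X \<longlonglongrightarrow> t"
    obtain R where R: "\<And>i. \<bar>X i\<bar> \<le> R" "\<bar>t\<bar> \<le> R" using bounded_seq[OF X(2)] by blast
    define f where "f n b = (u (X n) b - u t b) / (X n - t)" for n b
    have bnd: "\<bar>f n b\<bar> \<le> \<beta> 0 * exp R * wt b" if b: "b \<in> {0..1}" for n b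
    proof -
      have ne: "X n - t \<noteq> 0" using X(1) by auto
      have "\<bar>f n b\<bar> = \<bar>u (X n) b - u t b\<bar> / \<bar>X n - t\<bar>" by (simp add: f_def)
      also have "\<dots> \<le> (\<beta> 0 * exp (max (X n) t) * \<bar>X n - t\<bar> * wt b) / \<bar>X n - t\<bar>"
        by (intro divide_right_mono u_lip b) auto
      also have "\<dots> = \<beta> 0 * exp (max (X n) t) * wt b" using ne by simp
      also have "\<dots> \<le> \<beta> 0 * exp R * wt b"
        using R(1)[of n] R(2) beta_gt[of 0] wt_nonneg[of b]
        by (intro mult_right_mono mult_left_mono) (auto simp: max_def)
      finally show ?thesis .
    qed
    have fi: "f n integrable_on {0..1}" for n
      by (rule int01[OF _ bnd]) (simp add: f_def)
    have hi: "(\<lambda>b. \<beta> 0 * exp R * wt b) integrable_on {0..1}"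
      using integrable_on_cmult_left[OF wt_int] by simp
    have lim: "(\<lambda>n. integral {0..1} (f n)) \<longlonglongrightarrow> integral {0..1} (\<lambda>b. -(k t b * u t b))"
    proof (rule dct01(1)[OF fi hi bnd E])
      fix b assume b: "b \<in> {0<..<1} - E"
      show "(\<lambda>n. f n b) \<longlonglongrightarrow> -(k t b * u t b)"
        using conv_pt[OF b] X unfolding f_def tendsto_at_iff_sequentially by (auto simp: o_def)
    qed
    have eq: "integral {0..1} (f n) = (U (X n) - U t) / (X n - t)" for n
      unfolding f_def U_def by (simp add: integral_diff u_int)
    show "((\<lambda>y. (U y - U t) / (y - t)) \<circ> X) \<longlonglongrightarrow> - M t"
      using lim by (simp add: eq o_def M_def)
  qed
qed

lemma U_cont: "isCont U t" using U_deriv DERIV_isCont by blast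

lemma k_cont: "b \<in> {0<..<1} \<Longrightarrow> exp t * b \<notin> Dset \<Longrightarrow> isCont (\<lambda>s. k s b) t"
proof -
  assume b: "b \<in> {0<..<1}" and nd: "exp t * b \<notin> Dset"
  have xpos: "exp t * b > 0" using b by auto
  hence c: "isCont \<beta>p (exp t * b)" using nd betap_cont by (auto simp: Dset_def)
  have c2: "isCont (\<lambda>s. \<beta>p (exp s * b)) t"
    using isCont_o2[where f="\<lambda>s. exp s * b" and g=\<beta>p and a=t] c by (auto intro: continuous_intros)
  show ?thesis unfolding k_def by (intro continuous_intros c2)
qed

lemma M_cont: "isCont M t"
  unfolding continuous_at_sequentially
proof (intro allI impI)
  fix X :: "nat \<Rightarrow> real" assume X: "X \<longlonglongrightarrow> t"
  obtain R where R: "\<And>i. \<bar>X i\<bar> \<le> R" "\<bar>t\<bar> \<le> R" using bounded_seq[OF X] by blast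
  define E where "E = (\<lambda>x. x / exp t) ` Dset"
  have E: "countable E" unfolding E_def by (rule E_countable)
  have bnd: "\<bar>k (X n) b * u (X n) b\<bar> \<le> exp R * \<beta> 0 * wt b" if b: "b \<in> {0..1}" for n b
  proof -
    have "exp (X n) \<le> exp R" using R(1)[of n] by auto
    hence "exp (X n) * \<beta> 0 \<le> exp R * \<beta> 0" using beta_gt[of 0] by (intro mult_right_mono) auto
    hence k1: "k (X n) b \<le> exp R * \<beta> 0" "0 \<le> k (X n) b" using k_bounds[OF b, of "X n"] by auto
    have u1: "u (X n) b \<le> wt b" "0 \<le> u (X n) b" using u_bounds[OF b, of "X n"] by auto
    have "k (X n) b * u (X n) b \<le> exp R * \<beta> 0 * wt b"
      using k1 u1 beta_gt[of 0] by (intro mult_mono) auto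
    moreover have "0 \<le> k (X n) b * u (X n) b" using k1 u1 by simp
    ultimately show ?thesis by simp
  qed
  have hi: "(\<lambda>b. exp R * \<beta> 0 * wt b) integrable_on {0..1}"
    using integrable_on_cmult_left[OF wt_int] by simp
  have lim: "(\<lambda>n. integral {0..1} (\<lambda>b. k (X n) b * u (X n) b)) \<longlonglongrightarrow> integral {0..1} (\<lambda>b. k t b * u t b)"
  proof (rule dct01(1)[OF ku_int hi bnd E])
    fix b assume b: "b \<in> {0<..<1} - E"
    hence nd: "exp t * b \<notin> Dset" using notin_E[of b t] by (auto simp: E_def)
    have "isCont (\<lambda>s. k s b * u s b) t"
      using k_cont[OF _ nd] DERIV_isCont[OF u_deriv[OF _ nd]] b by (auto intro!: continuous_intros)
    thus "(\<lambda>n. k (X n) b * u (X n) b) \<longlonglongrightarrow> k t b * u t b"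
      using X by (rule isCont_tendsto_compose[where g="\<lambda>s. k s b * u s b"])
  qed
  thus "(M \<circ> X) \<longlonglongrightarrow> M t" by (simp add: M_def o_def)
qed

lemma wt_integral: "integral {0..1} wt = Beta 1 \<mu>"
proof -
  have i: "((\<lambda>t. t powr (1 - 1) * (1 - t) powr (\<mu> - 1)) has_integral Beta 1 \<mu>) {0..1}"
    using has_integral_Beta_real[of 1 \<mu>] mu by auto
  have "(wt has_integral Beta 1 \<mu>) {0..1}"
    by (rule has_integral_spike_finite[where S="{0}", OF _ _ i]) (auto simp: wt_def)
  thus ?thesis by (rule integral_unique)
qed

lemma Beta_pos: "0 < a \<Longrightarrow> 0 < b \<Longrightarrow> Beta a b > (0::real)"
  by (simp add: Beta_def Gamma_real_pos)

lemma U_pos: "U t > 0"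
proof -
  define c where "c = exp (- Bfun \<beta> (exp t))"
  have c: "c > 0" by (simp add: c_def)
  have le: "c * wt b \<le> u t b" if b: "b \<in> {0..1}" for b
  proof -
    have "Bfun \<beta> (exp t * b) \<le> Bfun \<beta> (exp t)" using b by (intro B_mono) auto
    thus ?thesis unfolding c_def u_def using wt_nonneg[of b] by (intro mult_right_mono) auto
  qed
  have "integral {0..1} (\<lambda>b. c * wt b) \<le> U t"
    unfolding U_def using le by (intro integral_le u_int integrable_on_cmult_left[OF wt_int, simplified]) auto
  moreover have "integral {0..1} (\<lambda>b. c * wt b) = c * Beta 1 \<mu>" by (simp add: wt_integral)
  moreover have "c * Beta 1 \<mu> > 0" using c Beta_pos[of 1 \<mu>] mu by auto
  ultimately show ?thesis by linarith
qed

lemma U_mono: "s \<le> t \<Longrightarrow> U t \<le> U s"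
  unfolding U_def
proof (intro integral_le u_int)
  fix b :: real assume st: "s \<le> t" and b: "b \<in> {0..1}"
  have "Bfun \<beta> (exp s * b) \<le> Bfun \<beta> (exp t * b)" using b st by (intro B_mono mult_right_mono) auto
  thus "u t b \<le> u s b" unfolding u_def using wt_nonneg[of b] by (intro mult_right_mono) auto
qed

lemma M_le: "0 \<le> M t \<and> M t \<le> exp t * \<beta> 0 * U t"
proof -
  have "integral {0..1} (\<lambda>b. k t b * u t b) \<le> integral {0..1} (\<lambda>b. exp t * \<beta> 0 * u t b)"
    using k_bounds u_bounds by (intro integral_le ku_int integrable_on_cmult_left[OF u_int, simplified])
      (auto intro!: mult_right_mono)
  moreover have "0 \<le> integral {0..1} (\<lambda>b. k t b * u t b)"
    using k_bounds u_bounds by (intro integral_nonneg ku_int) auto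
  ultimately show ?thesis by (simp add: M_def U_def)
qed

end

context L begin

definition "m t = M t / U t"
definition "fb b t = u t b / U t"
definition "\<phi> b t = fb b t * \<bar>m t - k t b\<bar>"

lemma U_meas[measurable]: "U \<in> borel_measurable borel"
  by (intro borel_measurable_continuous_onI continuous_at_imp_continuous_on) (auto intro: U_cont)
lemma M_meas[measurable]: "M \<in> borel_measurable borel"
  by (intro borel_measurable_continuous_onI continuous_at_imp_continuous_on) (auto intro: M_cont)

lemma u_cont_t: "b \<in> {0..1} \<Longrightarrow> isCont (\<lambda>s. u s b) t"
proof -
  assume b: "b \<in> {0..1}"
  show ?thesis
  proof (cases "b = 0")
    case True thus ?thesis by (simp add: u_def)
  next
    case False
    hence pos: "exp t * b > 0" using b by auto
    have "isCont (Bfun \<beta>) (exp t * b)"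
      using continuous_on_interior[OF B_cont, of "exp t * b"] pos by simp
    hence "isCont (\<lambda>s. Bfun \<beta> (exp s * b)) t"
      using isCont_o2[where f="\<lambda>s. exp s * b" and g="Bfun \<beta>" and a=t] by (auto intro: continuous_intros)
    thus ?thesis unfolding u_def by (intro continuous_intros)
  qed
qed

lemma fb_deriv:
  assumes b: "b \<in> {0<..<1}" and nd: "exp t * b \<notin> Dset"
  shows "(fb b has_real_derivative fb b t * (m t - k t b)) (at t)"
proof -
  have "((\<lambda>s. u s b / U s) has_real_derivative
      (-(k t b * u t b) * U t - u t b * (- M t)) / (U t * U t)) (at t)"
    by (rule DERIV_divide[OF u_deriv[OF b nd] U_deriv]) (use U_pos[of t] in auto)
  moreover have "(-(k t b * u t b) * U t - u t b * (- M t)) / (U t * U t) = fb b t * (m t - k t b)"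
    using U_pos[of t] by (simp add: fb_def m_def field_simps)
  ultimately show ?thesis by (simp add: fb_def[abs_def])
qed

lemma fb_cont: "b \<in> {0..1} \<Longrightarrow> isCont (fb b) t"
  unfolding fb_def[abs_def] using U_pos[of t]
  by (intro continuous_intros u_cont_t U_cont) auto

lemma phi_cont:
  assumes b: "b \<in> {0<..<1}" and nd: "exp t * b \<notin> Dset"
  shows "isCont (\<phi> b) t"
proof -
  have "isCont m t" unfolding m_def[abs_def] using U_pos[of t]
    by (intro continuous_intros M_cont U_cont) auto
  thus ?thesis unfolding \<phi>_def[abs_def]
    using fb_cont[of b t] k_cont[OF b nd] b by (intro continuous_intros) auto
qed

lemma m_bounds: "0 \<le> m t \<and> m t \<le> exp t * \<beta> 0"
  using M_le[of t] U_pos[of t] by (auto simp: m_def field_simps)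

lemma phi_meas[measurable]: "\<phi> b \<in> borel_measurable borel"
  unfolding \<phi>_def[abs_def] fb_def[abs_def] m_def[abs_def] k_def[abs_def] u_def[abs_def] by measurable

lemma phi_nonneg: "b \<in> {0..1} \<Longrightarrow> 0 \<le> \<phi> b t"
  using u_bounds[of b t] U_pos[of t] by (auto simp: \<phi>_def fb_def)

lemma phi_int:
  assumes b: "b \<in> {0..1}"
  shows "\<phi> b integrable_on {\<tau>..s}"
proof -
  define c where "c = wt b / U s * (2 * exp (max \<tau> s) * \<beta> 0)"
  show ?thesis
  proof (rule measurable_bounded_by_integrable_imp_integrable[where g="\<lambda>_. c"])
    show "\<phi> b \<in> borel_measurable (lebesgue_on {\<tau>..s})" by (intro borel_lebesgue_on phi_meas)
    show "(\<lambda>_. c) integrable_on {\<tau>..s}" by (rule integrable_const_ivl)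
    show "{\<tau>..s} \<in> sets lebesgue" by simp
    fix t assume t: "t \<in> {\<tau>..s}"
    have e: "exp t \<le> exp (max \<tau> s)" using t by auto
    have "fb b t \<le> wt b / U s"
      unfolding fb_def using u_bounds[OF b, of t] U_mono[of t s] U_pos[of t] U_pos[of s] t wt_nonneg[of b]
      by (intro frac_le) auto
    moreover have "\<bar>m t - k t b\<bar> \<le> 2 * exp (max \<tau> s) * \<beta> 0"
    proof -
      have "exp t * \<beta> 0 \<le> exp (max \<tau> s) * \<beta> 0" using e beta_gt[of 0] by (intro mult_right_mono) auto
      thus ?thesis using m_bounds[of t] k_bounds[OF b, of t] by (simp add: abs_le_iff)
    qed
    moreover have "0 \<le> fb b t" using u_bounds[OF b, of t] U_pos[of t] by (simp add: fb_def)
    ultimately have "\<phi> b t \<le> c" unfolding \<phi>_def c_def by (intro mult_mono) auto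
    thus "norm (\<phi> b t) \<le> c" using phi_nonneg[OF b] by simp
  qed
qed

lemma per_b:
  assumes b: "b \<in> {0<..<1}" and ts: "\<tau> \<le> s"
  shows "\<bar>fb b s - fb b \<tau>\<bar> \<le> integral {\<tau>..s} (\<phi> b)"
proof (rule ftc_countable_abs[OF ts _ _ phi_int])
  show "continuous_on {\<tau>..s} (fb b)" using b by (intro continuous_at_imp_continuous_on ballI fb_cont) auto
  show "countable (ln ` ((\<lambda>x. x / b) ` Dset))" using Dset_countable by auto
  show "b \<in> {0..1}" using b by auto
  fix t assume t: "t \<in> {\<tau><..<s} - ln ` ((\<lambda>x. x / b) ` Dset)"
  have nd: "exp t * b \<notin> Dset"
  proof
    assume "exp t * b \<in> Dset"
    hence "ln ((exp t * b) / b) \<in> ln ` ((\<lambda>x. x / b) ` Dset)" by blast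
    thus False using t b by simp
  qed
  show "(fb b has_real_derivative fb b t * (m t - k t b)) (at t) \<and>
        \<bar>fb b t * (m t - k t b)\<bar> \<le> \<phi> b t \<and> isCont (\<phi> b) t"
  proof (intro conjI)
    have "0 \<le> fb b t" using u_bounds[of b t] U_pos[of t] b by (simp add: fb_def)
    thus "\<bar>fb b t * (m t - k t b)\<bar> \<le> \<phi> b t" by (simp add: \<phi>_def abs_mult)
  qed (use fb_deriv[OF b nd] phi_cont[OF b nd] in auto)
qed

end

lemma dct01b:
  fixes f :: "nat \<Rightarrow> real \<Rightarrow> real" and F h :: "real \<Rightarrow> real"
  assumes fi: "\<And>n. f n integrable_on {0..1}" and hi: "h integrable_on {0..1}"
    and le: "\<And>n x. x \<in> {0<..<1} \<Longrightarrow> \<bar>f n x\<bar> \<le> h x"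
    and conv: "\<And>x. x \<in> {0<..<1} \<Longrightarrow> (\<lambda>n. f n x) \<longlonglongrightarrow> F x"
  shows "(\<lambda>n. integral {0..1} (f n)) \<longlonglongrightarrow> integral {0..1} F"
proof -
  define S where "S = {0<..<(1::real)}"
  have N: "negligible {0,1::real}" by auto
  have negs: "negligible {x \<in> {0..1} - S. p x \<noteq> 0}" "negligible {x \<in> S - {0..1}. p x \<noteq> 0}"
    for p :: "real \<Rightarrow> real"
  proof -
    show "negligible {x \<in> {0..1} - S. p x \<noteq> 0}"
      by (rule negligible_subset[OF N]) (auto simp: S_def)
    show "negligible {x \<in> S - {0..1}. p x \<noteq> 0}"
      by (rule negligible_subset[OF N]) (auto simp: S_def)
  qed
  have fiS: "f n integrable_on S" for n by (rule integrable_spike_set[OF fi negs])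
  have hiS: "h integrable_on S" by (rule integrable_spike_set[OF hi negs])
  have dc: "F integrable_on S" "(\<lambda>n. integral S (f n)) \<longlonglongrightarrow> integral S F"
    using dominated_convergence[where f=f and S=S and h=h and g=F] fiS hiS le conv
    by (auto simp: S_def)
  have eq: "integral {0..1} p = integral S p" for p :: "real \<Rightarrow> real"
    by (rule integral_spike_set[OF negs])
  show ?thesis using dc(2) by (simp add: eq)
qed

context L begin

definition "G x = integral {0..x} g"
definition "\<Gamma> = integral {0..} g"
definition "Ng = integral {0..} (\<lambda>s. \<bar>g s\<bar>)"

lemma absg_int: "(\<lambda>s. \<bar>g s\<bar>) integrable_on {0..}"
  using g_L1 unfolding absolutely_integrable_on_def by simp

lemma G_lim: "(G \<longlongrightarrow> \<Gamma>) at_top"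
proof (rule tendsto_at_topI_sequentially)
  fix X :: "nat \<Rightarrow> real" assume X: "filterlim X at_top sequentially"
  define f where "f n s = (if s \<in> {..X n} then g s else 0)" for n s
  have eqf: "integral {0..} (f n) = G (X n)" for n
    unfolding f_def G_def integral_restrict_Int by (simp add: Int_commute atLeastAtMost_def)
  have fi: "f n integrable_on {0..}" for n
    unfolding f_def integrable_restrict_Int by (simp add: Int_commute atLeastAtMost_def[symmetric] g_int)
  have "(\<lambda>n. integral {0..} (f n)) \<longlonglongrightarrow> integral {0..} g"
  proof (rule dominated_convergence(2)[OF fi absg_int])
    show "norm (f n s) \<le> \<bar>g s\<bar>" for n s by (simp add: f_def)
    fix s :: real
    have "eventually (\<lambda>n. X n \<ge> s) sequentially"
      using X by (simp add: filterlim_at_top)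
    hence "eventually (\<lambda>n. f n s = g s) sequentially"
      by eventually_elim (simp add: f_def)
    thus "(\<lambda>n. f n s) \<longlonglongrightarrow> g s" by (rule tendsto_eventually)
  qed
  thus "(\<lambda>n. G (X n)) \<longlonglongrightarrow> \<Gamma>" by (simp add: eqf \<Gamma>_def)
qed

lemma G_bound: "0 \<le> x \<Longrightarrow> \<bar>G x\<bar> \<le> Ng"
proof -
  assume x: "0 \<le> x"
  have "norm (integral {0..x} g) \<le> integral {0..x} (\<lambda>s. \<bar>g s\<bar>)"
    by (intro integral_norm_bound_integral g_int integrable_on_subinterval[OF absg_int]) auto
  also have "\<dots> \<le> Ng" unfolding Ng_def
    by (intro integral_subset_le integrable_on_subinterval[OF absg_int] absg_int) auto
  finally show ?thesis by (simp add: G_def)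
qed

lemma B_formula: "0 \<le> x \<Longrightarrow> Bfun \<beta> x = \<mu> * ln (1 + x) + G x"
proof -
  assume x: "0 \<le> x"
  have ftc: "((\<lambda>a. \<mu> / (1 + a)) has_integral (\<mu> * ln (1 + x) - \<mu> * ln (1 + 0))) {0..x}"
  proof (rule fundamental_theorem_of_calculus[OF x])
    fix a assume a: "a \<in> {0..x}"
    have "((\<lambda>a. \<mu> * ln (1 + a)) has_real_derivative \<mu> * (1 / (1 + a))) (at a within {0..x})"
      using a by (auto intro!: derivative_eq_intros)
    thus "((\<lambda>a. \<mu> * ln (1 + a)) has_vector_derivative \<mu> / (1 + a)) (at a within {0..x})"
      by (simp add: has_real_derivative_iff_has_vector_derivative)
  qed
  have "Bfun \<beta> x = integral {0..x} (\<lambda>a. \<mu> / (1 + a) + g a)"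
    unfolding Bfun_def by (rule integral_cong) (use beta_g in auto)
  also have "\<dots> = integral {0..x} (\<lambda>a. \<mu> / (1 + a)) + G x"
    unfolding G_def using ftc by (intro integral_add g_int) auto
  also have "integral {0..x} (\<lambda>a. \<mu> / (1 + a)) = \<mu> * ln (1 + x)"
    using ftc by (simp add: integral_unique)
  finally show ?thesis .
qed

lemma num_eq: "b \<in> {0<..<1} \<Longrightarrow>
   exp (\<mu> * s) * u s b = exp (- \<mu> * ln (exp (-s) + b) - G (exp s * b)) * wt b"
proof -
  assume b: "b \<in> {0<..<1}"
  have "ln (1 + exp s * b) = s + ln (exp (-s) + b)"
  proof -
    have "1 + exp s * b = exp s * (exp (-s) + b)" by (simp add: algebra_simps exp_minus)
    moreover have "exp (-s) + b > 0" using b by (auto intro: add_pos_pos)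
    ultimately show ?thesis using b by (simp add: ln_mult)
  qed
  moreover have "Bfun \<beta> (exp s * b) = \<mu> * ln (1 + exp s * b) + G (exp s * b)"
    using b by (intro B_formula) auto
  ultimately have "\<mu> * s - Bfun \<beta> (exp s * b) = - \<mu> * ln (exp (-s) + b) - G (exp s * b)"
    by (simp add: algebra_simps)
  thus ?thesis unfolding u_def by (simp add: exp_diff[symmetric] exp_add[symmetric] mult_ac exp_minus field_simps)
qed

lemma num_lim: "b \<in> {0<..<1} \<Longrightarrow>
   ((\<lambda>s. exp (\<mu> * s) * u s b) \<longlongrightarrow> exp (- \<Gamma>) * (b powr (-\<mu>) * wt b)) at_top"
proof -
  assume b: "b \<in> {0<..<1}"
  have e0: "((\<lambda>s::real. exp (-s)) \<longlongrightarrow> 0) at_top" using filterlim_compose[OF exp_at_bot filterlim_uminus_at_bot_at_top] by (simp add: o_def)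
  have l1: "((\<lambda>s. ln (exp (-s) + b)) \<longlongrightarrow> ln (0 + b)) at_top"
    using b by (intro tendsto_intros e0) auto
  have fx: "filterlim (\<lambda>s. exp s * b) at_top at_top"
    using b by (intro filterlim_at_top_mult_tendsto_pos[OF tendsto_const] exp_at_top) auto
  have l2: "((\<lambda>s. G (exp s * b)) \<longlongrightarrow> \<Gamma>) at_top" by (rule filterlim_compose[OF G_lim fx])
  have lim: "((\<lambda>s. exp (- \<mu> * ln (exp (-s) + b) - G (exp s * b)) * wt b) \<longlongrightarrow>
        exp (- \<mu> * ln (0 + b) - \<Gamma>) * wt b) at_top"
    by (intro tendsto_intros l1 l2)
  have e1: "exp (- \<mu> * ln b - \<Gamma>) = exp (- \<Gamma>) * b powr (-\<mu>)"
    using b by (simp add: powr_def exp_diff exp_minus field_simps)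
  have eqv: "exp (- \<mu> * ln (0 + b) - \<Gamma>) * wt b = exp (- \<Gamma>) * (b powr (-\<mu>) * wt b)"
    using e1 by simp
  show ?thesis unfolding num_eq[OF b] using lim unfolding eqv .
qed

definition "I = integral {0..1} (\<lambda>b. b powr (-\<mu>) * wt b)"

lemma I_int: "(\<lambda>b. b powr (-\<mu>) * wt b) integrable_on {0..1}" and I_eq: "I = Beta (1 - \<mu>) \<mu>"
proof -
  have "((\<lambda>b. b powr (1 - \<mu> - 1) * (1 - b) powr (\<mu> - 1)) has_integral Beta (1 - \<mu>) \<mu>) {0..1}"
    using mu by (intro has_integral_Beta_real) auto
  hence h: "((\<lambda>b. b powr (-\<mu>) * wt b) has_integral Beta (1 - \<mu>) \<mu>) {0..1}"
    by (simp add: wt_def)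
  thus "(\<lambda>b. b powr (-\<mu>) * wt b) integrable_on {0..1}" by (rule has_integral_integrable)
  show "I = Beta (1 - \<mu>) \<mu>" unfolding I_def using h by (rule integral_unique)
qed

lemma I_pos: "I > 0" using I_eq Beta_pos[of "1 - \<mu>" \<mu>] mu by simp

lemma den_lim: "((\<lambda>s. exp (\<mu> * s) * U s) \<longlongrightarrow> exp (- \<Gamma>) * I) at_top"
proof (rule tendsto_at_topI_sequentially)
  fix X :: "nat \<Rightarrow> real" assume X: "filterlim X at_top sequentially"
  define f where "f n b = exp (\<mu> * X n) * u (X n) b" for n b
  have fi: "f n integrable_on {0..1}" for n
    unfolding f_def using integrable_on_cmult_left[OF u_int] by simp
  have hi: "(\<lambda>b. exp Ng * (b powr (-\<mu>) * wt b)) integrable_on {0..1}"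
    using integrable_on_cmult_left[OF I_int] by simp
  have "(\<lambda>n. integral {0..1} (f n)) \<longlonglongrightarrow> integral {0..1} (\<lambda>b. exp (- \<Gamma>) * (b powr (-\<mu>) * wt b))"
  proof (rule dct01b[OF fi hi])
    fix n and b :: real assume b: "b \<in> {0<..<1}"
    have "ln b \<le> ln (exp (- X n) + b)" using b by (subst ln_le_cancel_iff) (auto intro: add_pos_pos)
    hence "- \<mu> * ln (exp (- X n) + b) \<le> - \<mu> * ln b" using mu by simp
    moreover have "- G (exp (X n) * b) \<le> Ng" using G_bound[of "exp (X n) * b"] b by auto
    ultimately have "exp (- \<mu> * ln (exp (- X n) + b) - G (exp (X n) * b)) \<le> exp (- \<mu> * ln b + Ng)"
      by simp
    also have "\<dots> = exp Ng * b powr (-\<mu>)" using b by (simp add: powr_def exp_diff exp_minus field_simps)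
    finally have "f n b \<le> exp Ng * b powr (-\<mu>) * wt b"
      unfolding f_def num_eq[OF b] using wt_nonneg[of b] by (intro mult_right_mono) auto
    moreover have "0 \<le> f n b" unfolding f_def using u_bounds[of b "X n"] b by simp
    ultimately show "\<bar>f n b\<bar> \<le> exp Ng * (b powr (-\<mu>) * wt b)" by (simp add: mult_ac)
  next
    fix b :: real assume b: "b \<in> {0<..<1}"
    show "(\<lambda>n. f n b) \<longlonglongrightarrow> exp (- \<Gamma>) * (b powr (-\<mu>) * wt b)"
      unfolding f_def by (rule filterlim_compose[OF num_lim[OF b] X])
  qed
  moreover have "integral {0..1} (f n) = exp (\<mu> * X n) * U (X n)" for n
    unfolding f_def U_def by simp
  ultimately show "(\<lambda>n. exp (\<mu> * X n) * U (X n)) \<longlonglongrightarrow> exp (- \<Gamma>) * I"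
    by (simp add: I_def)
qed

lemma fb_lim: "b \<in> {0<..<1} \<Longrightarrow> (fb b \<longlongrightarrow> Winf \<mu> b) at_top"
proof -
  assume b: "b \<in> {0<..<1}"
  have "((\<lambda>s. (exp (\<mu> * s) * u s b) / (exp (\<mu> * s) * U s)) \<longlongrightarrow>
          (exp (- \<Gamma>) * (b powr (-\<mu>) * wt b)) / (exp (- \<Gamma>) * I)) at_top"
    using I_pos by (intro tendsto_divide num_lim[OF b] den_lim) auto
  moreover have "(exp (\<mu> * s) * u s b) / (exp (\<mu> * s) * U s) = fb b s" for s
    by (simp add: fb_def)
  moreover have "(exp (- \<Gamma>) * (b powr (-\<mu>) * wt b)) / (exp (- \<Gamma>) * I) = Winf \<mu> b"
    by (simp add: Winf_def I_def wt_def)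
  ultimately show ?thesis by (simp add: fb_def[abs_def])
qed

end

context L begin

definition "H t = integral {0..1} (\<lambda>b. \<bar>k t b - \<mu>\<bar> * fb b t)"

lemma fb_int: "(\<lambda>b. fb b t) integrable_on {0..1}" and fb_integral: "integral {0..1} (\<lambda>b. fb b t) = 1"
proof -
  have e: "(\<lambda>b. fb b t) = (\<lambda>b. inverse (U t) * u t b)" by (simp add: fb_def[abs_def] field_simps)
  show "(\<lambda>b. fb b t) integrable_on {0..1}" unfolding e using integrable_on_cmult_left[OF u_int] by simp
  show "integral {0..1} (\<lambda>b. fb b t) = 1" unfolding e using U_pos[of t] by (simp add: U_def[symmetric])
qed

lemma fb_nonneg: "b \<in> {0..1} \<Longrightarrow> 0 \<le> fb b t"
  using u_bounds[of b t] U_pos[of t] by (simp add: fb_def)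

lemma kfb_int: "(\<lambda>b. k t b * fb b t) integrable_on {0..1}" and kfb_integral: "integral {0..1} (\<lambda>b. k t b * fb b t) = m t"
proof -
  have e: "(\<lambda>b. k t b * fb b t) = (\<lambda>b. inverse (U t) * (k t b * u t b))" by (simp add: fb_def[abs_def] field_simps)
  show "(\<lambda>b. k t b * fb b t) integrable_on {0..1}" unfolding e using integrable_on_cmult_left[OF ku_int] by simp
  show "integral {0..1} (\<lambda>b. k t b * fb b t) = m t" unfolding e by (simp add: m_def M_def[symmetric] field_simps)
qed

lemma fb_meas[measurable]: "(\<lambda>b. fb b t) \<in> borel_measurable borel"
  unfolding fb_def by measurable

lemma afb_int: "(\<lambda>b. \<bar>k t b - \<mu>\<bar> * fb b t) integrable_on {0..1}"
proof (rule int01[where c="(exp t * \<beta> 0 + \<mu>) / U t"])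
  show "(\<lambda>b. \<bar>k t b - \<mu>\<bar> * fb b t) \<in> borel_measurable borel" by measurable
  fix b :: real assume b: "b \<in> {0..1}"
  have "\<bar>k t b - \<mu>\<bar> \<le> exp t * \<beta> 0 + \<mu>" using k_bounds[OF b, of t] mu by (simp add: abs_le_iff)
  moreover have "fb b t \<le> wt b / U t" "0 \<le> fb b t"
    using u_bounds[OF b, of t] U_pos[of t] by (auto simp: fb_def divide_right_mono)
  ultimately have "\<bar>k t b - \<mu>\<bar> * fb b t \<le> (exp t * \<beta> 0 + \<mu>) * (wt b / U t)"
    by (intro mult_mono) auto
  thus "\<bar>\<bar>k t b - \<mu>\<bar> * fb b t\<bar> \<le> (exp t * \<beta> 0 + \<mu>) / U t * wt b"
    using fb_nonneg[OF b, of t] by simp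
qed

lemma m_mu: "\<bar>m t - \<mu>\<bar> \<le> H t"
proof -
  have "m t - \<mu> = integral {0..1} (\<lambda>b. k t b * fb b t) - integral {0..1} (\<lambda>b. \<mu> * fb b t)"
    using kfb_integral[of t] fb_integral[of t] by simp
  also have "\<dots> = integral {0..1} (\<lambda>b. k t b * fb b t - \<mu> * fb b t)"
    using kfb_int[of t] integrable_on_cmult_left[OF fb_int[of t], of \<mu>]
    by (intro integral_diff[symmetric]) auto
  also have "\<dots> = integral {0..1} (\<lambda>b. (k t b - \<mu>) * fb b t)"
    by (simp add: left_diff_distrib)
  finally have eq: "m t - \<mu> = integral {0..1} (\<lambda>b. (k t b - \<mu>) * fb b t)" .
  have "norm (integral {0..1} (\<lambda>b. (k t b - \<mu>) * fb b t)) \<le> H t"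
    unfolding H_def
  proof (rule integral_norm_bound_integral[OF _ afb_int])
    show "(\<lambda>b. (k t b - \<mu>) * fb b t) integrable_on {0..1}"
      using integrable_diff[OF kfb_int[of t] integrable_on_cmult_left[OF fb_int[of t], of \<mu>]]
      by (simp add: left_diff_distrib)
    fix b :: real assume "b \<in> {0..1}"
    thus "norm ((k t b - \<mu>) * fb b t) \<le> \<bar>k t b - \<mu>\<bar> * fb b t" using fb_nonneg[of b t] by (simp add: abs_mult)
  qed
  thus ?thesis using eq by simp
qed

lemma phi_le: "b \<in> {0..1} \<Longrightarrow> \<phi> b t \<le> \<bar>k t b - \<mu>\<bar> * fb b t + H t * fb b t"
proof -
  assume b: "b \<in> {0..1}"
  have "\<bar>m t - k t b\<bar> \<le> \<bar>m t - \<mu>\<bar> + \<bar>\<mu> - k t b\<bar>" using abs_triangle_ineq[of "m t - \<mu>" "\<mu> - k t b"] by simp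
  hence "\<bar>m t - k t b\<bar> \<le> \<bar>k t b - \<mu>\<bar> + H t" using m_mu[of t] by linarith
  hence "fb b t * \<bar>m t - k t b\<bar> \<le> fb b t * (\<bar>k t b - \<mu>\<bar> + H t)"
    using fb_nonneg[OF b, of t] by (intro mult_left_mono) auto
  thus ?thesis by (simp add: \<phi>_def algebra_simps)
qed

lemma H_nonneg: "0 \<le> H t"
  unfolding H_def using fb_nonneg by (intro integral_nonneg afb_int) auto

lemma nn01: "(\<And>b. b \<in> {0..1} \<Longrightarrow> 0 \<le> f b) \<Longrightarrow> f integrable_on {0..1} \<Longrightarrow>
   (\<integral>\<^sup>+ b. ennreal (f b) * indicator {0..1} b \<partial>lborel) = ennreal (integral {0..1} f)"
proof -
  assume f: "\<And>b. b \<in> {0..1} \<Longrightarrow> 0 \<le> f b" "f integrable_on {0..1}"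
  have "(\<integral>\<^sup>+ b. ennreal (indicator {0..1} b * f b) \<partial>lborel) = ennreal (integral {0..1} f)"
    using f by (intro nn_integral_has_integral_lebesgue) (auto intro: integrable_integral)
  moreover have "ennreal (indicator {0..1} b * f b) = ennreal (f b) * indicator {0..1} b" for b
    by (auto simp: indicator_def)
  ultimately show ?thesis by simp
qed

lemma inner_bound:
  "(\<integral>\<^sup>+ b. ennreal (\<phi> b t) * indicator {0..1} b \<partial>lborel)
     \<le> 2 * (\<integral>\<^sup>+ b. ennreal (\<bar>k t b - \<mu>\<bar> * fb b t) * indicator {0..1} b \<partial>lborel)"
proof -
  define A where "A = (\<integral>\<^sup>+ b. ennreal (\<bar>k t b - \<mu>\<bar> * fb b t) * indicator {0..1} b \<partial>lborel)"
  have A: "A = ennreal (H t)" unfolding A_def H_def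
    by (rule nn01[OF _ afb_int]) (use fb_nonneg in auto)
  have "(\<integral>\<^sup>+ b. ennreal (\<phi> b t) * indicator {0..1} b \<partial>lborel)
      \<le> (\<integral>\<^sup>+ b. (ennreal (\<bar>k t b - \<mu>\<bar> * fb b t) * indicator {0..1} b
                 + ennreal (H t) * (ennreal (fb b t) * indicator {0..1} b)) \<partial>lborel)"
  proof (intro nn_integral_mono)
    fix b :: real
    show "ennreal (\<phi> b t) * indicator {0..1} b
      \<le> ennreal (\<bar>k t b - \<mu>\<bar> * fb b t) * indicator {0..1} b + ennreal (H t) * (ennreal (fb b t) * indicator {0..1} b)"
    proof (cases "b \<in> {0..1}")
      case True
      have "ennreal (\<phi> b t) \<le> ennreal (\<bar>k t b - \<mu>\<bar> * fb b t + H t * fb b t)"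
        using phi_le[OF True, of t] by (rule ennreal_leI)
      also have "\<dots> = ennreal (\<bar>k t b - \<mu>\<bar> * fb b t) + ennreal (H t) * ennreal (fb b t)"
        using fb_nonneg[OF True, of t] H_nonneg[of t] by (simp add: ennreal_plus ennreal_mult)
      finally show ?thesis using True by simp
    qed simp
  qed
  also have "\<dots> = A + ennreal (H t) * (\<integral>\<^sup>+ b. ennreal (fb b t) * indicator {0..1} b \<partial>lborel)"
    unfolding A_def by (subst nn_integral_add) (auto simp: nn_integral_cmult)
  also have "(\<integral>\<^sup>+ b. ennreal (fb b t) * indicator {0..1} b \<partial>lborel) = 1"
    using nn01[OF _ fb_int, of t] fb_nonneg fb_integral[of t] by simp
  finally show ?thesis by (simp add: A[symmetric] A_def mult_2)
qed

lemma per_b_inf: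
  assumes b: "b \<in> {0<..<1}"
  shows "ennreal \<bar>fb b \<tau> - Winf \<mu> b\<bar> \<le> (\<integral>\<^sup>+ t. ennreal (\<phi> b t) * indicator {\<tau>..} t \<partial>lborel)"
proof -
  define N where "N = (\<integral>\<^sup>+ t. ennreal (\<phi> b t) * indicator {\<tau>..} t \<partial>lborel)"
  have b01: "b \<in> {0..1}" using b by auto
  have le_s: "ennreal \<bar>fb b s - fb b \<tau>\<bar> \<le> N" if s: "\<tau> \<le> s" for s
  proof -
    have "ennreal \<bar>fb b s - fb b \<tau>\<bar> \<le> ennreal (integral {\<tau>..s} (\<phi> b))"
      by (intro ennreal_leI per_b[OF b s])
    also have "ennreal (integral {\<tau>..s} (\<phi> b)) = (\<integral>\<^sup>+ t. ennreal (indicator {\<tau>..s} t * \<phi> b t) \<partial>lborel)"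
      by (intro nn_integral_has_integral_lebesgue[symmetric] phi_nonneg[OF b01]
          integrable_integral phi_int[OF b01])
    also have "\<dots> \<le> N" unfolding N_def
      by (intro nn_integral_mono) (auto simp: indicator_def)
    finally show ?thesis .
  qed
  have lim: "((\<lambda>s. ennreal \<bar>fb b s - fb b \<tau>\<bar>) \<longlongrightarrow> ennreal \<bar>Winf \<mu> b - fb b \<tau>\<bar>) at_top"
    by (intro tendsto_ennrealI tendsto_intros fb_lim[OF b])
  have "ennreal \<bar>Winf \<mu> b - fb b \<tau>\<bar> \<le> N"
    by (rule tendsto_upperbound[OF lim]) (auto intro: le_s eventually_mono[OF eventually_ge_at_top[of \<tau>]])
  thus ?thesis by (simp add: N_def abs_minus_commute)
qed

lemma joint_meas[measurable]:
  "(\<lambda>(b, t). ennreal (\<phi> b t) * indicator {\<tau>..} t * indicator {0..1::real} b) \<in> borel_measurable (lborel \<Otimes>\<^sub>M lborel)"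
  unfolding \<phi>_def[abs_def] fb_def[abs_def] m_def[abs_def] k_def[abs_def] u_def[abs_def]
  by measurable

lemma joint_meas2:
  "(\<lambda>(t, b). ennreal (\<bar>k t b - \<mu>\<bar> * fb b t) * indicator {0..1::real} b) \<in> borel_measurable (lborel \<Otimes>\<^sub>M lborel)"
  unfolding fb_def[abs_def] k_def[abs_def] u_def[abs_def]
  by measurable

end

theorem lemma10:
  fixes \<mu> K0 \<alpha> :: real and \<beta> g C :: "real \<Rightarrow> real" and \<tau> :: real
  assumes mu: "0 < \<mu>" "\<mu> < 1"
    and beta_pos: "\<forall>a\<ge>0. \<beta> a > 0"
    and beta_bdd: "bounded (\<beta> ` {0..})"
    and beta_mono: "\<forall>a b. 0 \<le> a \<longrightarrow> a \<le> b \<longrightarrow> \<beta> b \<le> \<beta> a"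
    and beta_lim: "((\<lambda>a. a * \<beta> a) \<longlongrightarrow> \<mu>) at_top"
    and beta_g: "\<forall>a\<ge>0. \<beta> a = \<mu> / (1 + a) + g a"
    and g_L1: "g absolutely_integrable_on {0..}"
    and K0: "K0 > 0" and alpha: "\<alpha> > 0"
    and g_tail: "\<forall>a\<ge>0. integral {a..} (\<lambda>s. \<bar>g s\<bar>) \<le> K0 * (1 + a) powr (-\<alpha>)"
    and C_pos: "\<forall>t\<ge>0. C t > 0"
    and C_norm: "\<forall>t\<ge>0. integral {0..1} (Wfun \<mu> \<beta> C t) = 1"
    and tau: "\<tau> \<ge> 0"
  shows "(\<integral>\<^sup>+ b\<in>{0..1}. ennreal \<bar>Wfun \<mu> \<beta> C \<tau> b - Winf \<mu> b\<bar> \<partial>lborel)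
      \<le> 2 * (\<integral>\<^sup>+ t\<in>{\<tau>..}. (\<integral>\<^sup>+ b\<in>{0..1}.
              ennreal (\<bar>exp t * b * \<beta> (exp t * b) - \<mu>\<bar> * Wfun \<mu> \<beta> C t b) \<partial>lborel) \<partial>lborel)"
proof -
  interpret L \<mu> \<beta> g by (unfold_locales) (use mu beta_pos beta_mono beta_g g_L1 in auto)
  have W_eq: "Wfun \<mu> \<beta> C t b = fb b t" if t: "t \<ge> 0" for t b
  proof -
    have e: "Wfun \<mu> \<beta> C t = (\<lambda>b. C t * u t b)"
      by (simp add: Wfun_def u_def wt_def fun_eq_iff mult.assoc)
    have h: "integral {0..1} (Wfun \<mu> \<beta> C t) = 1" using C_norm t by auto
    hence "C t * U t = 1" unfolding e U_def by simp
    hence "C t = 1 / U t" using U_pos[of t] by (simp add: field_simps)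
    thus ?thesis by (simp add: e fb_def)
  qed
  define F where "F b t = ennreal (\<phi> b t) * indicator {\<tau>..} t * indicator {0..1::real} b" for b t
  define Hn where "Hn t = (\<integral>\<^sup>+ b. ennreal (\<bar>k t b - \<mu>\<bar> * fb b t) * indicator {0..1::real} b \<partial>lborel)" for t
  have "(\<integral>\<^sup>+ b\<in>{0..1}. ennreal \<bar>Wfun \<mu> \<beta> C \<tau> b - Winf \<mu> b\<bar> \<partial>lborel)
      = (\<integral>\<^sup>+ b. ennreal \<bar>fb b \<tau> - Winf \<mu> b\<bar> * indicator {0..1} b \<partial>lborel)"
    using W_eq[OF tau] by simp
  also have "\<dots> \<le> (\<integral>\<^sup>+ b. (\<integral>\<^sup>+ t. ennreal (\<phi> b t) * indicator {\<tau>..} t \<partial>lborel) * indicator {0..1} b \<partial>lborel)"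
  proof (rule nn_integral_mono_AE)
    have "AE b in lborel. b \<noteq> 0" "AE b in lborel. b \<noteq> 1" by (rule AE_lborel_singleton)+
    thus "AE b in lborel. ennreal \<bar>fb b \<tau> - Winf \<mu> b\<bar> * indicator {0..1} b
        \<le> (\<integral>\<^sup>+ t. ennreal (\<phi> b t) * indicator {\<tau>..} t \<partial>lborel) * indicator {0..1} b"
    proof eventually_elim
      case (elim b)
      show ?case
      proof (cases "b \<in> {0..1}")
        case True
        hence "b \<in> {0<..<1}" using elim by auto
        thus ?thesis using per_b_inf[of b \<tau>] True by simp
      qed simp
    qed
  qed
  also have "\<dots> = (\<integral>\<^sup>+ b. (\<integral>\<^sup>+ t. F b t \<partial>lborel) \<partial>lborel)"
    unfolding F_def by (intro nn_integral_cong nn_integral_multc[symmetric]) measurable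
  also have "\<dots> = (\<integral>\<^sup>+ t. (\<integral>\<^sup>+ b. F b t \<partial>lborel) \<partial>lborel)"
    by (rule lborel_pair.Fubini'[symmetric]) (unfold F_def, rule joint_meas)
  also have "\<dots> \<le> (\<integral>\<^sup>+ t. 2 * (Hn t * indicator {\<tau>..} t) \<partial>lborel)"
  proof (intro nn_integral_mono)
    fix t :: real
    show "(\<integral>\<^sup>+ b. F b t \<partial>lborel) \<le> 2 * (Hn t * indicator {\<tau>..} t)"
    proof (cases "t \<in> {\<tau>..}")
      case True
      have "(\<integral>\<^sup>+ b. F b t \<partial>lborel) = (\<integral>\<^sup>+ b. ennreal (\<phi> b t) * indicator {0..1} b \<partial>lborel)"
        using True by (simp add: F_def)
      also have "\<dots> \<le> 2 * Hn t" unfolding Hn_def by (rule inner_bound)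
      finally show ?thesis using True by simp
    qed (simp add: F_def)
  qed
  also have "\<dots> = 2 * (\<integral>\<^sup>+ t. Hn t * indicator {\<tau>..} t \<partial>lborel)"
  proof (rule nn_integral_cmult)
    have "Hn \<in> borel_measurable lborel"
      unfolding Hn_def using lborel.borel_measurable_nn_integral[OF joint_meas2] by simp
    thus "(\<lambda>t. Hn t * indicator {\<tau>..} t) \<in> borel_measurable lborel" by measurable
  qed
  also have "(\<integral>\<^sup>+ t. Hn t * indicator {\<tau>..} t \<partial>lborel)
     = (\<integral>\<^sup>+ t\<in>{\<tau>..}. (\<integral>\<^sup>+ b\<in>{0..1}.
              ennreal (\<bar>exp t * b * \<beta> (exp t * b) - \<mu>\<bar> * Wfun \<mu> \<beta> C t b) \<partial>lborel) \<partial>lborel)"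
  proof (intro nn_integral_cong)
    fix t :: real
    show "Hn t * indicator {\<tau>..} t = (\<integral>\<^sup>+ b\<in>{0..1}.
              ennreal (\<bar>exp t * b * \<beta> (exp t * b) - \<mu>\<bar> * Wfun \<mu> \<beta> C t b) \<partial>lborel) * indicator {\<tau>..} t"
    proof (cases "t \<in> {\<tau>..}")
      case True
      hence t0: "t \<ge> 0" using tau by auto
      have "Hn t = (\<integral>\<^sup>+ b\<in>{0..1}.
              ennreal (\<bar>exp t * b * \<beta> (exp t * b) - \<mu>\<bar> * Wfun \<mu> \<beta> C t b) \<partial>lborel)"
        unfolding Hn_def
      proof (intro nn_integral_cong)
        fix b :: real
        show "ennreal (\<bar>k t b - \<mu>\<bar> * fb b t) * indicator {0..1} b =
          ennreal (\<bar>exp t * b * \<beta> (exp t * b) - \<mu>\<bar> * Wfun \<mu> \<beta> C t b) * indicator {0..1} b"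
          by (cases "b \<in> {0..1}") (auto simp: k_eq W_eq[OF t0])
      qed
      thus ?thesis by simp
    qed simp
  qed
  finally show ?thesis .
qed

end
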